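(* Let $S=s_1,\ldots,s_n$ be a sequence of nonnegative integers, $\gamma>0$ and $k$ a positive integer. Let $(L,\alpha,\beta)$ be an optimal solution of $\textsc{Geo}$ for $S,\gamma,k$, with $L=\ell_1,\ldots,\ell_n$. If there is an index $j$ with $s_j\ell_j\ne0$, then $\alpha\ge\frac{1}{1+nk}$.
   Context: A level sequence is $L=\ell_1,\ldots,\ell_n$ of integers with $0\le\ell_i\le k$; set $\ell_0=0$. The penalty is $\mathrm{pen}(x,y)=\max(y-x,0)\,\gamma\log n$. The geometric distribution is $p_{\mathrm{geo}}(s;\lambda)=(1-\lambda)\lambda^s$ (with $0^0=1$). For $0\le\alpha<1$, $0<\beta<1$: $\mathrm{score}_{\mathrm{geo}}(L,S;\alpha,\beta,\gamma)=\sum_{i=1}^n\big[-\log p_{\mathrm{geo}}(s_i;\beta\alpha^{\ell_i})+\mathrm{pen}(\ell_{i-1},\ell_i)\big]$. Problem $\textsc{Geo}$: given $S,\gamma,k$, find $L$, $\alpha$ and $\beta$ minimizing this score. *)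

theory Defs
  imports Complex_Main "HOL-Library.Extended_Real"
begin

definition level_seq :: "nat \<Rightarrow> nat \<Rightarrow> (nat \<Rightarrow> nat) \<Rightarrow> bool" where
  "level_seq n k L \<longleftrightarrow> (\<forall>i\<in>{1..n}. L i \<le> k)"

definition prev_level :: "(nat \<Rightarrow> nat) \<Rightarrow> nat \<Rightarrow> nat" where
  "prev_level L i = (if i \<le> 1 then 0 else L (i - 1))"

definition pen :: "nat \<Rightarrow> real \<Rightarrow> nat \<Rightarrow> nat \<Rightarrow> real" where
  "pen n \<gamma> x y = max (real y - real x) 0 * \<gamma> * ln (real n)"

text \<open>Geometric distribution; real power with nat exponent, so 0^0 = 1.\<close>
definition p_geo :: "nat \<Rightarrow> real \<Rightarrow> real" where
  "p_geo s lam = (1 - lam) * lam ^ s"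

definition neglog :: "real \<Rightarrow> ereal" where
  "neglog p = (if p \<le> 0 then \<infinity> else ereal (- ln p))"

definition score_geo ::
  "nat \<Rightarrow> (nat \<Rightarrow> nat) \<Rightarrow> (nat \<Rightarrow> nat) \<Rightarrow> real \<Rightarrow> real \<Rightarrow> real \<Rightarrow> ereal" where
  "score_geo n L S \<alpha> \<beta> \<gamma> =
     (\<Sum>i\<in>{1..n}. neglog (p_geo (S i) (\<beta> * \<alpha> ^ L i))
                  + ereal (pen n \<gamma> (prev_level L i) (L i)))"

definition geo_feasible :: "nat \<Rightarrow> nat \<Rightarrow> (nat \<Rightarrow> nat) \<Rightarrow> real \<Rightarrow> real \<Rightarrow> bool" where
  "geo_feasible n k L \<alpha> \<beta> \<longleftrightarrow> level_seq n k L \<and> 0 \<le> \<alpha> \<and> \<alpha> < 1 \<and> 0 < \<beta> \<and> \<beta> < 1"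

definition geo_optimal ::
  "nat \<Rightarrow> (nat \<Rightarrow> nat) \<Rightarrow> real \<Rightarrow> nat \<Rightarrow> (nat \<Rightarrow> nat) \<Rightarrow> real \<Rightarrow> real \<Rightarrow> bool" where
  "geo_optimal n S \<gamma> k L \<alpha> \<beta> \<longleftrightarrow>
     geo_feasible n k L \<alpha> \<beta> \<and>
     (\<forall>L' \<alpha>' \<beta>'. geo_feasible n k L' \<alpha>' \<beta>' \<longrightarrow>
        score_geo n L S \<alpha> \<beta> \<gamma> \<le> score_geo n L' S \<alpha>' \<beta>' \<gamma>)"

end

theory Submission
  imports Defs
begin

lemma ln_strict: assumes "0 < (x::real)" "x \<noteq> 1" shows "ln x < x - 1"
proof -
  have s: "sqrt x > 0" using assms by simp
  have "ln x = 2 * ln (sqrt x)" using assms by (simp add: ln_sqrt)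
  also have "\<dots> \<le> 2 * (sqrt x - 1)" using ln_le_minus_one[OF s] by simp
  also have "\<dots> < x - 1"
  proof -
    have "sqrt x \<noteq> 1" using assms by simp
    hence "(sqrt x - 1)^2 > 0" by simp
    moreover have "(sqrt x)^2 = x" using assms by simp
    ultimately show ?thesis by (simp add: power2_eq_square algebra_simps)
  qed
  finally show ?thesis .
qed

lemma pow_diff_le: "0 \<le> (y::real) \<Longrightarrow> y \<le> x \<Longrightarrow> x \<le> 1 \<Longrightarrow> x^m - y^m \<le> real m * (x - y)"
proof (induction m)
  case 0 then show ?case by simp
next
  case (Suc m)
  have "x^Suc m - y^Suc m = x * (x^m - y^m) + y^m * (x - y)" by (simp add: algebra_simps)
  also have "\<dots> \<le> (x^m - y^m) + (x - y)"
  proof -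
    have d: "x^m - y^m \<ge> 0" using Suc.prems by (simp add: power_mono)
    have "x * (x^m - y^m) \<le> 1 * (x^m - y^m)" using d Suc.prems by (intro mult_right_mono) auto
    moreover have "y^m * (x - y) \<le> 1 * (x - y)"
      using Suc.prems by (intro mult_right_mono) (auto simp: power_le_one)
    ultimately show ?thesis by simp
  qed
  also have "\<dots> \<le> real (Suc m) * (x - y)" using Suc by (simp add: algebra_simps)
  finally show ?case .
qed

lemma term_bound:
  fixes a a' b :: real and l k :: nat
  assumes "0 < a" "a < a'" "a' < 1" "0 < b" "b < 1" "l \<le> k"
  shows "ln (1 - b * a^l) - ln (1 - b * a'^l) \<le> real k * (a' - a) / (1 - a')"
proof -
  have al: "a^l \<le> a'^l" using assms by (simp add: power_mono)
  have a'l1: "a'^l \<le> 1" using assms by (simp add: power_le_one)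
  have pa: "0 < 1 - b * a^l" using assms al a'l1
    by (smt (verit) mult_less_cancel_right2 zero_less_power)
  have pb: "0 < 1 - b * a'^l" using assms a'l1
    by (smt (verit) mult_less_cancel_right2 zero_less_power)
  have "ln (1 - b * a^l) - ln (1 - b * a'^l) = ln ((1 - b * a^l) / (1 - b * a'^l))"
    using pa pb by (simp add: ln_div)
  also have "\<dots> \<le> (1 - b * a^l) / (1 - b * a'^l) - 1" using pa pb by (intro ln_le_minus_one) simp
  also have "\<dots> = b * (a'^l - a^l) / (1 - b * a'^l)" using pb by (simp add: field_simps)
  also have "\<dots> \<le> real k * (a' - a) / (1 - a')"
  proof (cases "l = 0")
    case True then show ?thesis using assms by simp
  next
    case False
    have "a'^l \<le> a'" using power_decreasing[of 1 l a'] False assms by simp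
    hence den: "1 - a' \<le> 1 - b * a'^l" using assms a'l1
      by (smt (verit) mult_le_cancel_right1 zero_less_power)
    have num: "b * (a'^l - a^l) \<le> real k * (a' - a)"
    proof -
      have "b * (a'^l - a^l) \<le> 1 * (a'^l - a^l)" using assms al by (intro mult_right_mono) auto
      also have "\<dots> \<le> real l * (a' - a)" using pow_diff_le[of a a' l] assms by simp
      also have "\<dots> \<le> real k * (a' - a)" using assms by (intro mult_right_mono) auto
      finally show ?thesis .
    qed
    have "b * (a'^l - a^l) / (1 - b * a'^l) \<le> real k * (a' - a) / (1 - b * a'^l)"
      using num pb by (simp add: divide_right_mono)
    also have "\<dots> \<le> real k * (a' - a) / (1 - a')"
      using den assms by (intro divide_left_mono) auto
    finally show ?thesis .
  qed
  finally show ?thesis .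
qed

theorem lemma6:
  fixes S L :: "nat \<Rightarrow> nat" and n k j :: nat and \<gamma> \<alpha> \<beta> :: real
  assumes "\<gamma> > 0" and "k > 0"
    and "geo_optimal n S \<gamma> k L \<alpha> \<beta>"
    and "j \<in> {1..n}" and "S j * L j \<noteq> 0"
  shows "\<alpha> \<ge> 1 / (1 + real n * real k)"
proof (rule ccontr)
  define a' where "a' = 1 / (1 + real n * real k)"
  assume "\<not> ?thesis"
  hence lt: "\<alpha> < a'" unfolding a'_def by simp
  have feas: "geo_feasible n k L \<alpha> \<beta>" and opt: "\<And>L' a b. geo_feasible n k L' a b \<Longrightarrow>
      score_geo n L S \<alpha> \<beta> \<gamma> \<le> score_geo n L' S a b \<gamma>"
    using assms(3) unfolding geo_optimal_def by auto
  have n1: "n \<ge> 1" using assms(4) by simp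
  have nk: "real n * real k \<ge> 1" using n1 assms(2) mult_mono[of 1 "real n" 1 "real k"] by simp
  have a'pos: "0 < a'" unfolding a'_def using nk by simp
  have a'lt: "a' < 1" unfolding a'_def using nk by simp
  have oma': "1 - a' = real n * real k / (1 + real n * real k)" unfolding a'_def using nk
    by (simp add: field_simps)
  have nz: "real n \<noteq> 0" "real k \<noteq> 0" using n1 assms(2) by auto
  have key: "real n * (real k / (1 - a')) = 1 / a'" unfolding oma' a'_def using nk nz
    by (simp add: field_simps)
  have b: "0 < \<beta>" "\<beta> < 1" "0 \<le> \<alpha>" and lv: "level_seq n k L" using feas unfolding geo_feasible_def by auto
  have feas': "geo_feasible n k L a' \<beta>" using b lv a'pos a'lt unfolding geo_feasible_def by auto
  define f where "f a i = - ln (p_geo (S i) (\<beta> * a ^ L i)) + pen n \<gamma> (prev_level L i) (L i)" for a i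
  have pos: "0 < p_geo (S i) (\<beta> * a ^ L i)" if "0 < a" "a < 1" for a i
  proof -
    have "a ^ L i \<le> 1" using that by (simp add: power_le_one)
    hence "\<beta> * a ^ L i < 1" using b by (smt (verit) mult_le_cancel_right1 zero_less_power that(1))
    moreover have "0 < \<beta> * a ^ L i" using b that by simp
    ultimately show ?thesis unfolding p_geo_def by simp
  qed
  have fin: "score_geo n L S a \<beta> \<gamma> = ereal (\<Sum>i\<in>{1..n}. f a i)" if "0 < a" "a < 1" for a
  proof -
    have "score_geo n L S a \<beta> \<gamma> = (\<Sum>i\<in>{1..n}. ereal (f a i))"
      unfolding score_geo_def f_def neglog_def using pos[OF that]
      by (intro sum.cong) (auto simp: not_le)
    thus ?thesis by simp
  qed
  have sc': "score_geo n L S a' \<beta> \<gamma> = ereal (\<Sum>i\<in>{1..n}. f a' i)" using fin a'pos a'lt by simp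
  show False
  proof (cases "\<alpha> = 0")
    case True
    have "p_geo (S j) (\<beta> * \<alpha> ^ L j) = 0" using True assms(5) unfolding p_geo_def by simp
    hence "neglog (p_geo (S j) (\<beta> * \<alpha> ^ L j)) + ereal (pen n \<gamma> (prev_level L j) (L j)) = \<infinity>"
      unfolding neglog_def by simp
    hence "score_geo n L S \<alpha> \<beta> \<gamma> = \<infinity>" unfolding score_geo_def using assms(4)
      by (subst sum_Pinfty) auto
    with opt[OF feas'] sc' show False by simp
  next
    case False
    hence ap: "0 < \<alpha>" using b by simp
    have al1: "\<alpha> < 1" using lt a'lt by simp
    define D where "D = ln a' - ln \<alpha>"
    have sc: "score_geo n L S \<alpha> \<beta> \<gamma> = ereal (\<Sum>i\<in>{1..n}. f \<alpha> i)" using fin ap lt a'lt by simp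
    have diff: "f a' i - f \<alpha> i \<le> real k * (a' - \<alpha>) / (1 - a') - real (S i * L i) * D"
      if "i \<in> {1..n}" for i
    proof -
      have li: "L i \<le> k" using lv that unfolding level_seq_def by auto
      have lnp: "ln (p_geo (S i) (\<beta> * a ^ L i)) = ln (1 - \<beta> * a ^ L i) + real (S i) * ln \<beta>
          + real (S i * L i) * ln a" if "0 < a" "a < 1" for a
      proof -
        define x where "x = \<beta> * a ^ L i"
        have xp: "0 < x" using b that unfolding x_def by simp
        have "0 < (1 - x) * x ^ S i" using pos[OF that, of i] unfolding p_geo_def x_def .
        hence "x < 1" using xp zero_less_mult_pos2[of "1 - x" "x ^ S i"] by simp
        hence "ln (p_geo (S i) x) = ln (1 - x) + ln (x ^ S i)" unfolding p_geo_def
          using xp by (simp add: ln_mult)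
        also have "ln (x ^ S i) = real (S i) * ln x" by (rule ln_realpow)
        also have "ln x = ln \<beta> + real (L i) * ln a" unfolding x_def
          using b that by (simp add: ln_mult ln_realpow)
        finally show ?thesis unfolding x_def by (simp add: algebra_simps)
      qed
      have "f a' i - f \<alpha> i = ln (1 - \<beta> * \<alpha> ^ L i) - ln (1 - \<beta> * a' ^ L i) - real (S i * L i) * D"
        unfolding f_def D_def lnp[OF ap al1] lnp[OF a'pos a'lt] right_diff_distrib by linarith
      also have "\<dots> \<le> real k * (a' - \<alpha>) / (1 - a') - real (S i * L i) * D"
        using term_bound[OF ap lt a'lt b(1) b(2) li] by simp
      finally show ?thesis .
    qed
    have Dpos: "D > 1 - \<alpha> / a'"
    proof -
      have "ln (\<alpha> / a') < \<alpha> / a' - 1" using ap a'pos lt by (intro ln_strict) auto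
      thus ?thesis unfolding D_def using ap a'pos by (simp add: ln_div)
    qed
    have "\<alpha> / a' < 1" using a'pos lt by simp
    hence Dnn: "D \<ge> 0" using Dpos by linarith
    have "(\<Sum>i\<in>{1..n}. f a' i) - (\<Sum>i\<in>{1..n}. f \<alpha> i) = (\<Sum>i\<in>{1..n}. f a' i - f \<alpha> i)"
      by (simp add: sum_subtractf)
    also have "\<dots> \<le> (\<Sum>i\<in>{1..n}. real k * (a' - \<alpha>) / (1 - a') - real (S i * L i) * D)"
      using diff by (intro sum_mono) auto
    also have "\<dots> = real n * (real k / (1 - a')) * (a' - \<alpha>) - (\<Sum>i\<in>{1..n}. real (S i * L i)) * D"
      by (simp add: sum_subtractf sum_distrib_right)
    also have "\<dots> \<le> (a' - \<alpha>) / a' - D"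
    proof -
      have "real (S j * L j) \<le> (\<Sum>i\<in>{1..n}. real (S i * L i))"
        using assms(4) by (intro member_le_sum) auto
      moreover have "1 \<le> S j * L j" using assms(5) by simp
      hence "1 \<le> real (S j * L j)" by (metis of_nat_1 of_nat_le_iff)
      ultimately have "D \<le> (\<Sum>i\<in>{1..n}. real (S i * L i)) * D" using Dnn
        using mult_right_mono[of 1 "\<Sum>i\<in>{1..n}. real (S i * L i)" D] by simp
      thus ?thesis unfolding key by simp
    qed
    also have "\<dots> < 0" using Dpos a'pos by (simp add: field_simps)
    finally have "(\<Sum>i\<in>{1..n}. f a' i) < (\<Sum>i\<in>{1..n}. f \<alpha> i)" by simp
    with opt[OF feas'] sc sc' show False by simp
  qed
qed

end
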